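(* Let $\{G_i\}_{i\ge1}$ be a family of connected finite simple (unweighted) graphs such that $G_i$ has $i$ vertices, and for a partition $\lambda$ let $G_\lambda=G_{\lambda_1}\cup\dots\cup G_{\lambda_{\ell(\lambda)}}$ (disjoint union), so that $\{X_{G_\lambda}\}_\lambda$ is a basis of $\Lambda$. Then for every finite simple graph $G$ with $n$ vertices, \[\sum_{\lambda\vdash n}[X_{G_\lambda}]X_G=1.\]
   Context: $\Lambda$ is the algebra of symmetric functions over $\mathbb{Q}$. $X_G=\sum_\kappa\prod_v x_{\kappa(v)}$ over proper colourings $\kappa:V(G)\to\{1,2,\dots\}$. It is known that for such a family $\{G_i\}$ the functions $X_{G_\lambda}$ form a basis of $\Lambda$. $[X_{G_\lambda}]f$ denotes the coefficient of $X_{G_\lambda}$ in the expansion of $f$ in this basis. *)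

theory Defs
  imports Complex_Main "HOL-Library.FuncSet"
begin

definition simple_graph :: "'a set \<Rightarrow> ('a \<Rightarrow> 'a \<Rightarrow> bool) \<Rightarrow> bool" where
  "simple_graph V E \<longleftrightarrow> finite V \<and> (\<forall>u\<in>V. \<forall>v\<in>V. E u v \<longrightarrow> E v u) \<and> (\<forall>v\<in>V. \<not> E v v)"

definition connected_graph :: "'a set \<Rightarrow> ('a \<Rightarrow> 'a \<Rightarrow> bool) \<Rightarrow> bool" where
  "connected_graph V E \<longleftrightarrow>
     (\<forall>u\<in>V. \<forall>v\<in>V. (\<lambda>x y. x \<in> V \<and> y \<in> V \<and> E x y)\<^sup>*\<^sup>* u v)"

definition proper_colourings :: "'a set \<Rightarrow> ('a \<Rightarrow> 'a \<Rightarrow> bool) \<Rightarrow> ('a \<Rightarrow> nat) set" where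
  "proper_colourings V E =
     {\<kappa>. \<kappa> \<in> V \<rightarrow>\<^sub>E {1..} \<and> (\<forall>u\<in>V. \<forall>v\<in>V. E u v \<longrightarrow> \<kappa> u \<noteq> \<kappa> v)}"

text \<open>The chromatic symmetric function X_G, viewed as a formal power series in
x_1, x_2, ...: its coefficient of the monomial prod_i x_i^(alpha i).\<close>
definition chrom_sym :: "'a set \<Rightarrow> ('a \<Rightarrow> 'a \<Rightarrow> bool) \<Rightarrow> (nat \<Rightarrow> nat) \<Rightarrow> rat" where
  "chrom_sym V E \<alpha> =
     of_nat (card {\<kappa> \<in> proper_colourings V E. \<forall>i. card {v \<in> V. \<kappa> v = i} = \<alpha> i})"

definition partitions_of :: "nat \<Rightarrow> nat list set" where
  "partitions_of n = {la. sorted_wrt (\<ge>) la \<and> (\<forall>p\<in>set la. 0 < p) \<and> sum_list la = n}"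

text \<open>A family of graphs G_i, G_i having vertex set {0..<i} and edge relation Fam i.
The disjoint union G_lambda has vertex set {(j,v). j < length lambda, v < lambda!j}.\<close>
definition union_vertices :: "nat list \<Rightarrow> (nat \<times> nat) set" where
  "union_vertices la = {(j, v). j < length la \<and> v < la ! j}"

definition union_edges ::
  "(nat \<Rightarrow> nat \<Rightarrow> nat \<Rightarrow> bool) \<Rightarrow> nat list \<Rightarrow> nat \<times> nat \<Rightarrow> nat \<times> nat \<Rightarrow> bool" where
  "union_edges Fam la x y \<longleftrightarrow> fst x = fst y \<and> Fam (la ! fst x) (snd x) (snd y)"

end

theory Submission
  imports Defs
begin

definition alphan :: "nat \<Rightarrow> nat \<Rightarrow> nat" where
  "alphan n i = (if i \<in> {1..n} then 1 else 0)"

lemma set_eq: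
  assumes fin: "finite V" and irr: "\<forall>v\<in>V. \<not> E v v" and cV: "card V = n"
  shows "{\<kappa> \<in> proper_colourings V E. \<forall>i. card {v \<in> V. \<kappa> v = i} = alphan n i}
       = {f \<in> V \<rightarrow>\<^sub>E {1..n}. inj_on f V}" (is "?L = ?R")
proof
  show "?L \<subseteq> ?R"
  proof
    fix \<kappa> assume k: "\<kappa> \<in> ?L"
    then have pe: "\<kappa> \<in> V \<rightarrow>\<^sub>E {1..}" and cnt: "\<And>i. card {v \<in> V. \<kappa> v = i} = alphan n i"
      unfolding proper_colourings_def by auto
    have range: "\<kappa> v \<in> {1..n}" if "v \<in> V" for v
    proof -
      have "v \<in> {w \<in> V. \<kappa> w = \<kappa> v}" using that by auto
      then have "card {w \<in> V. \<kappa> w = \<kappa> v} \<noteq> 0" using fin by (auto simp: card_eq_0_iff)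
      then have "alphan n (\<kappa> v) \<noteq> 0" using cnt by metis
      then show ?thesis by (simp add: alphan_def split: if_splits)
    qed
    have inj: "inj_on \<kappa> V"
    proof (rule inj_onI, rule ccontr)
      fix u v assume uv: "u \<in> V" "v \<in> V" "\<kappa> u = \<kappa> v" "u \<noteq> v"
      have "{u, v} \<subseteq> {w \<in> V. \<kappa> w = \<kappa> v}" using uv by auto
      then have "card {u,v} \<le> card {w \<in> V. \<kappa> w = \<kappa> v}"
        by (rule card_mono[rotated]) (use fin in auto)
      then have "2 \<le> alphan n (\<kappa> v)" using uv cnt by simp
      then show False by (simp add: alphan_def split: if_splits)
    qed
    show "\<kappa> \<in> ?R" using pe range inj by (auto simp: PiE_def Pi_def)
  qed
next
  show "?R \<subseteq> ?L"
  proof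
    fix \<kappa> assume k: "\<kappa> \<in> ?R"
    then have pe: "\<kappa> \<in> V \<rightarrow>\<^sub>E {1..n}" and inj: "inj_on \<kappa> V" by auto
    have img: "\<kappa> ` V = {1..n}"
    proof (rule card_subset_eq)
      show "\<kappa> ` V \<subseteq> {1..n}" using pe by auto
      show "card (\<kappa> ` V) = card {1..n}" using inj cV by (simp add: card_image)
    qed simp
    have pc: "\<kappa> \<in> proper_colourings V E"
      unfolding proper_colourings_def using pe inj irr
      by (auto simp: PiE_def Pi_def inj_on_def)
    have "card {v \<in> V. \<kappa> v = i} = alphan n i" for i
    proof (cases "i \<in> {1..n}")
      case True
      then obtain v where v: "v \<in> V" "\<kappa> v = i" using img by (metis imageE)
      have "{w \<in> V. \<kappa> w = i} = {v}" using v inj by (auto simp: inj_on_def)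
      then show ?thesis using True by (simp add: alphan_def)
    next
      case False
      have e: "{w \<in> V. \<kappa> w = i} = {}" using img False by auto
      show ?thesis unfolding e alphan_def using False by simp
    qed
    then show "\<kappa> \<in> ?L" using pc by auto
  qed
qed

lemma chrom_val:
  assumes fin: "finite V" and irr: "\<forall>v\<in>V. \<not> E v v" and cV: "card V = n"
  shows "chrom_sym V E (alphan n) = of_nat (prod ((-) n) {0..<n})"
proof -
  have "card {f \<in> V \<rightarrow>\<^sub>E {1..n}. inj_on f V} = card {1..n} ^ (card V - card V) * prod ((-) (card {1..n})) {0..<card V}"
    by (rule card_inj_on_subset_funcset) (use fin in auto)
  then show ?thesis unfolding chrom_sym_def set_eq[of V E n, OF fin irr cV] using cV by simp
qed

lemma card_union_vertices: "card (union_vertices la) = sum_list la" "finite (union_vertices la)"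
proof -
  have eq: "union_vertices la = Sigma {..<length la} (\<lambda>j. {..<la!j})"
    unfolding union_vertices_def by auto
  show "card (union_vertices la) = sum_list la"
    unfolding eq by (simp add: card_SigmaI sum_list_sum_nth atLeast0LessThan)
  show "finite (union_vertices la)" unfolding eq by simp
qed

theorem theorem3p5:
  fixes Fam :: "nat \<Rightarrow> nat \<Rightarrow> nat \<Rightarrow> bool"
    and V :: "'a set" and E :: "'a \<Rightarrow> 'a \<Rightarrow> bool"
    and c :: "nat list \<Rightarrow> rat"
  assumes fam: "\<And>i. i \<ge> 1 \<Longrightarrow> simple_graph {0..<i} (Fam i) \<and> connected_graph {0..<i} (Fam i)"
    and G: "simple_graph V E"
    and expansion: "\<forall>\<alpha>. chrom_sym V E \<alpha> =
        (\<Sum>la\<in>partitions_of (card V). c la * chrom_sym (union_vertices la) (union_edges Fam la) \<alpha>)"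
  shows "(\<Sum>la\<in>partitions_of (card V). c la) = 1"
proof -
  define n where "n = card V"
  define P :: rat where "P = of_nat (prod ((-) n) {0..<n})"
  have P0: "P \<noteq> 0" unfolding P_def by simp
  have A: "chrom_sym V E (alphan n) = P"
    unfolding P_def by (rule chrom_val) (use G in \<open>auto simp: simple_graph_def n_def\<close>)
  have U: "chrom_sym (union_vertices la) (union_edges Fam la) (alphan n) = P"
    if la: "la \<in> partitions_of n" for la
  proof -
    have irr: "\<forall>v\<in>union_vertices la. \<not> union_edges Fam la v v"
    proof
      fix x assume x: "x \<in> union_vertices la"
      obtain j v where jv: "x = (j, v)" "j < length la" "v < la ! j"
        using x unfolding union_vertices_def by auto
      have "la ! j \<in> set la" using jv by simp
      then have "la ! j \<ge> 1" using la unfolding partitions_of_def by auto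
      then have "simple_graph {0..<la!j} (Fam (la!j))" using fam by blast
      then show "\<not> union_edges Fam la x x"
        using jv unfolding simple_graph_def union_edges_def by auto
    qed
    have "sum_list la = n" using la unfolding partitions_of_def by auto
    then show ?thesis unfolding P_def
      by (intro chrom_val irr) (simp_all add: card_union_vertices)
  qed
  have "P = chrom_sym V E (alphan n)" using A by simp
  also have "\<dots> = (\<Sum>la\<in>partitions_of n. c la * chrom_sym (union_vertices la) (union_edges Fam la) (alphan n))"
    using expansion unfolding n_def by blast
  also have "\<dots> = (\<Sum>la\<in>partitions_of n. c la * P)"
    by (rule sum.cong) (simp_all add: U)
  also have "\<dots> = (\<Sum>la\<in>partitions_of n. c la) * P" by (simp add: sum_distrib_right)
  finally show ?thesis using P0 unfolding n_def by simp
qed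

end
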